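(* For a positive integer $N$, let $\mathcal S_4$ be the set of pairs $(A,B)$ of $3\times 3$ matrices with entries in $[-N,N]\cap\mathbb{Z}$, written \[ A = \begin{pmatrix} a_1 & a_2 & a_3 \\ a_4 & a_5 & a_6 \\ a_7 & a_8 & a_9 \end{pmatrix},\qquad B = \begin{pmatrix} b_1 & b_2 & b_3 \\ b_4 & b_5 & b_6 \\ b_7 & b_8 & b_9 \end{pmatrix}, \] such that $AB=BA$ and the $6\times 4$ matrix \[ M = \begin{pmatrix} -b_2 & a_2 & 0 & 0 \\ b_4 & -a_4 & 0 & 0 \\ 0 & 0 & -b_3 & a_3 \\ 0 & 0 & b_7 & -a_7 \\ b_8 & -a_8 & -b_8 & a_8 \\ -b_6 & a_6 & b_6 & -a_6 \end{pmatrix} \] has rank $4$. Then $|\mathcal S_4|\le CN^{10}$ for an absolute constant $C>0$ and all $N\ge 1$. *)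

theory Defs
  imports "HOL-Analysis.Analysis"
begin

definition ent :: "int^3^3 \<Rightarrow> nat \<Rightarrow> int" where
  "ent A k = A $ (of_nat ((k - 1) div 3 + 1)) $ (of_nat ((k - 1) mod 3 + 1))"

definition Mmat :: "int^3^3 \<Rightarrow> int^3^3 \<Rightarrow> real^4^6" where
  "Mmat A B = (let a = (\<lambda>k. real_of_int (ent A k)); b = (\<lambda>k. real_of_int (ent B k)) in
     vector [
       vector [- b 2, a 2, 0, 0],
       vector [b 4, - a 4, 0, 0],
       vector [0, 0, - b 3, a 3],
       vector [0, 0, b 7, - a 7],
       vector [b 8, - a 8, - b 8, a 8],
       vector [- b 6, a 6, b 6, - a 6]])"

definition S4 :: "int \<Rightarrow> ((int^3^3) \<times> (int^3^3)) set" where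
  "S4 N = {p. let A = fst p; B = snd p in
                 (\<forall>i j. \<bar>A $ i $ j\<bar> \<le> N \<and> \<bar>B $ i $ j\<bar> \<le> N)
                 \<and> A ** B = B ** A \<and> rank (Mmat A B) = 4}"

end

theory Submission
  imports Defs
begin


lemma card_residue_le:
  fixes k L x0 :: int
  assumes k: "k \<ge> 1" and L: "L \<ge> 0"
  shows "real (card {x \<in> {-L..L}. k dvd (x - x0)}) \<le> 2 * L / k + 1"
proof -
  define lo where "lo = \<lceil>real_of_int (-L - x0) / k\<rceil>"
  define hi where "hi = \<lfloor>real_of_int (L - x0) / k\<rfloor>"
  let ?S = "{x \<in> {-L..L}. k dvd (x - x0)}"
  have inj: "inj_on (\<lambda>x. (x - x0) div k) ?S"
  proof (rule inj_onI)
    fix x y assume "x \<in> ?S" "y \<in> ?S" "(x - x0) div k = (y - x0) div k"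
    then have "x - x0 = y - x0" by (metis (no_types, lifting) dvd_mult_div_cancel mem_Collect_eq)
    then show "x = y" by simp
  qed
  have sub: "(\<lambda>x. (x - x0) div k) ` ?S \<subseteq> {lo..hi}"
  proof
    fix q assume "q \<in> (\<lambda>x. (x - x0) div k) ` ?S"
    then obtain x where x: "x \<in> {-L..L}" "k dvd (x - x0)" and q: "q = (x - x0) div k" by auto
    have xq: "x - x0 = k * q" using x(2) q by simp
    have kr: "real_of_int k > 0" using k by simp
    have "real_of_int (-L - x0) \<le> real_of_int k * q" using x(1) xq
      by (metis atLeastAtMost_iff diff_right_mono of_int_le_iff of_int_mult)
    then have "real_of_int (-L - x0) / k \<le> q" using kr by (simp add: divide_le_eq mult.commute)
    then have 1: "lo \<le> q" unfolding lo_def by (simp add: ceiling_le_iff)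
    have "real_of_int k * q \<le> real_of_int (L - x0)" using x(1) xq
      by (metis atLeastAtMost_iff diff_right_mono of_int_le_iff of_int_mult)
    then have "q \<le> real_of_int (L - x0) / k" using kr by (simp add: le_divide_eq mult.commute)
    then have 2: "q \<le> hi" unfolding hi_def by (simp add: le_floor_iff)
    show "q \<in> {lo..hi}" using 1 2 by simp
  qed
  have "card ?S = card ((\<lambda>x. (x - x0) div k) ` ?S)" using inj by (simp add: card_image)
  also have "\<dots> \<le> card {lo..hi}" using sub by (intro card_mono) auto
  finally have c: "card ?S \<le> nat (hi - lo + 1)" by simp
  have kr: "real_of_int k > 0" using k by simp
  have "real_of_int hi - real_of_int lo \<le> real_of_int (L - x0) / k - real_of_int (-L - x0) / k"
    unfolding hi_def lo_def by (smt (verit) ceiling_correct floor_correct)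
  also have "\<dots> = 2 * L / k" using kr by (simp add: field_simps)
  finally have h: "real_of_int hi - real_of_int lo \<le> 2 * L / k" .
  have "2 * L / k \<ge> 0" using kr L by simp
  then have "real (nat (hi - lo + 1)) \<le> 2 * L / k + 1" using h by linarith
  then show ?thesis using c by (meson le_trans of_nat_le_iff order_trans)
qed

definition det2 :: "int \<times> int \<Rightarrow> int \<times> int \<Rightarrow> int" where
  "det2 v w = fst v * snd w - snd v * fst w"

lemma card_line_le:
  fixes p q t N :: int
  assumes p: "p \<noteq> 0" and N: "N \<ge> 0"
  shows "real (card {w \<in> {-N..N} \<times> {-N..N}. p * snd w - q * fst w = t}) \<le> 2 * N * gcd p q / \<bar>p\<bar> + 1"
    and "\<not> gcd p q dvd t \<Longrightarrow> card {w \<in> {-N..N} \<times> {-N..N}. p * snd w - q * fst w = t} = 0"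
proof -
  let ?S = "{w \<in> {-N..N} \<times> {-N..N}. p * snd w - q * fst w = t}"
  define g where "g = gcd p q"
  have gpos: "g > 0" using p unfolding g_def by simp
  have gp: "g dvd p" "g dvd q" unfolding g_def by auto
  show "\<not> gcd p q dvd t \<Longrightarrow> card ?S = 0"
  proof -
    assume nd: "\<not> gcd p q dvd t"
    have "?S = {}"
    proof (rule ccontr)
      assume "?S \<noteq> {}"
      then obtain w where "p * snd w - q * fst w = t" by auto
      then have "g dvd t" using gp by (metis dvd_diff dvd_mult2)
      then show False using nd g_def by simp
    qed
    then show "card ?S = 0" by simp
  qed
  show "real (card ?S) \<le> 2 * N * gcd p q / \<bar>p\<bar> + 1"
  proof (cases "?S = {}")
    case True
    have "0 \<le> 2 * N * gcd p q / \<bar>p\<bar>" using N by simp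
    moreover have "card ?S = 0" by (subst True) simp
    moreover have "real (card ?S) = 0" by (metis calculation(2) of_nat_0)
    ultimately show ?thesis by linarith
  next
    case False
    then obtain w0 where w0: "w0 \<in> ?S" by blast
    define k where "k = \<bar>p\<bar> div g"
    have pk: "\<bar>p\<bar> = k * g" unfolding k_def using gp by simp
    have "k * g > 0" using pk p by simp
    then have "k > 0" using gpos by (simp add: zero_less_mult_iff)
    then have k1: "k \<ge> 1" by simp
    have inj: "inj_on fst ?S"
    proof (rule inj_onI)
      fix w w' assume "w \<in> ?S" "w' \<in> ?S" "fst w = fst w'"
      then have "p * snd w = p * snd w'" by auto
      then have "snd w = snd w'" using p by simp
      then show "w = w'" using \<open>fst w = fst w'\<close> by (simp add: prod_eq_iff)
    qed
    have sub: "fst ` ?S \<subseteq> {x \<in> {-N..N}. k dvd (x - fst w0)}"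
    proof
      fix x assume "x \<in> fst ` ?S"
      then obtain w where w: "w \<in> ?S" "x = fst w" by auto
      have e: "p * (snd w - snd w0) = q * (fst w - fst w0)" using w(1) w0 by (simp add: algebra_simps)
      obtain p' q' where pq: "p = g * p'" "q = g * q'" using gp by (auto elim!: dvdE)
      have cop: "coprime p' q'" using pq gpos unfolding g_def
        by (metis div_gcd_coprime gcd_eq_0_iff gpos less_irrefl nonzero_mult_div_cancel_left g_def)
      have "p' * (snd w - snd w0) = q' * (fst w - fst w0)" using e pq gpos by (simp add: mult.assoc)
      then have "p' dvd q' * (fst w - fst w0)" by (metis dvd_triv_left)
      then have "p' dvd (fst w - fst w0)" using cop by (simp add: coprime_dvd_mult_right_iff)
      moreover have "k = \<bar>p'\<bar>" using pk pq gpos by (simp add: abs_mult)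
      ultimately have "k dvd (x - fst w0)" using w(2) by simp
      then show "x \<in> {x \<in> {-N..N}. k dvd (x - fst w0)}" using w by auto
    qed
    have "card ?S = card (fst ` ?S)" using inj by (simp add: card_image)
    also have "\<dots> \<le> card {x \<in> {-N..N}. k dvd (x - fst w0)}" using sub by (intro card_mono) (rule finite_subset[of _ "{-N..N}"], auto)
    finally have "real (card ?S) \<le> 2 * N / k + 1" using card_residue_le[OF k1 N, of "fst w0"] by linarith
    also have "2 * N / k = 2 * N * gcd p q / \<bar>p\<bar>" using pk gpos p unfolding g_def by (simp add: field_simps)
    finally show ?thesis .
  qed
qed

definition mx :: "int \<times> int \<Rightarrow> int" where "mx v = max \<bar>fst v\<bar> \<bar>snd v\<bar>"
definition gv :: "int \<times> int \<Rightarrow> int" where "gv v = gcd (fst v) (snd v)"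

lemma card_det_le:
  fixes N t :: int and v :: "int \<times> int"
  assumes v: "v \<noteq> (0,0)" and N: "N \<ge> 0"
  shows "real (card {w \<in> {-N..N} \<times> {-N..N}. det2 v w = t}) \<le> 2 * N * gv v / mx v + 1"
    and "\<not> gv v dvd t \<Longrightarrow> card {w \<in> {-N..N} \<times> {-N..N}. det2 v w = t} = 0"
proof -
  obtain a b where ab: "v = (a, b)" by (cases v)
  have "(\<bar>b\<bar> \<le> \<bar>a\<bar> \<and> a \<noteq> 0) \<or> (\<bar>a\<bar> < \<bar>b\<bar> \<and> b \<noteq> 0)" using v ab by auto
  then have "real (card {w \<in> {-N..N} \<times> {-N..N}. det2 v w = t}) \<le> 2 * N * gv v / mx v + 1 \<and>
     (\<not> gv v dvd t \<longrightarrow> card {w \<in> {-N..N} \<times> {-N..N}. det2 v w = t} = 0)"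
  proof
    assume h: "\<bar>b\<bar> \<le> \<bar>a\<bar> \<and> a \<noteq> 0"
    have S: "{w \<in> {-N..N} \<times> {-N..N}. det2 v w = t} = {w \<in> {-N..N} \<times> {-N..N}. a * snd w - b * fst w = t}"
      using ab by (auto simp: det2_def)
    have m: "mx v = \<bar>a\<bar>" "gv v = gcd a b" using ab h by (auto simp: mx_def gv_def)
    show ?thesis using card_line_le[of a N b t] h N unfolding S m by auto
  next
    assume h: "\<bar>a\<bar> < \<bar>b\<bar> \<and> b \<noteq> 0"
    have S: "{w \<in> {-N..N} \<times> {-N..N}. det2 v w = t} = prod.swap ` {w \<in> {-N..N} \<times> {-N..N}. b * snd w - a * fst w = -t}"
      using ab by (force simp: det2_def algebra_simps image_iff)
    have c: "card {w \<in> {-N..N} \<times> {-N..N}. det2 v w = t} = card {w \<in> {-N..N} \<times> {-N..N}. b * snd w - a * fst w = -t}"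
      unfolding S by (rule card_image) (simp add: inj_on_def)
    have m: "mx v = \<bar>b\<bar>" "gv v = gcd b a" using ab h by (auto simp: mx_def gv_def gcd.commute)
    show ?thesis using card_line_le[of b N a "-t"] h N unfolding c m by auto
  qed
  then show "real (card {w \<in> {-N..N} \<times> {-N..N}. det2 v w = t}) \<le> 2 * N * gv v / mx v + 1"
    and "\<not> gv v dvd t \<Longrightarrow> card {w \<in> {-N..N} \<times> {-N..N}. det2 v w = t} = 0" by auto
qed

lemma fin_int_range[simp]: "finite {y::int. a \<le> y \<and> y \<le> b \<and> P y}"
  by (rule finite_subset[of _ "{a..b}"]) auto

lemma sum_if_const:
  assumes "finite A"
  shows "(\<Sum>y\<in>A. if Q y then (c::real) else 0) = c * real (card {y\<in>A. Q y})"
  using assms by (simp add: sum.If_cases Int_def)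

lemma sum_g1:
  fixes d N :: int
  assumes d: "1 \<le> d" "d \<le> N"
  shows "(\<Sum>v\<in>{-N..N}\<times>{-N..N}. if fst v \<noteq> 0 \<and> \<bar>snd v\<bar> \<le> \<bar>fst v\<bar> \<and> d dvd fst v \<and> d dvd snd v
            then real_of_int d / \<bar>fst v\<bar> else 0) \<le> 9 * N / d"
proof -
  let ?f = "\<lambda>v::int\<times>int. if fst v \<noteq> 0 \<and> \<bar>snd v\<bar> \<le> \<bar>fst v\<bar> \<and> d dvd fst v \<and> d dvd snd v
            then real_of_int d / \<bar>fst v\<bar> else 0"
  have eq: "(\<Sum>v\<in>{-N..N}\<times>{-N..N}. ?f v) = (\<Sum>x\<in>{-N..N}. \<Sum>y\<in>{-N..N}. ?f (x,y))"
    by (subst sum.cartesian_product) (rule sum.cong, auto)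
  have inner: "(\<Sum>y\<in>{-N..N}. ?f (x,y)) \<le> (if x \<noteq> 0 \<and> d dvd x then 3 else 0)" for x
  proof (cases "x \<noteq> 0 \<and> d dvd x")
    case False
    then show ?thesis by auto
  next
    case True
    have "(\<Sum>y\<in>{-N..N}. ?f (x,y)) = (\<Sum>y\<in>{-N..N}. if \<bar>y\<bar> \<le> \<bar>x\<bar> \<and> d dvd y then real_of_int d / \<bar>x\<bar> else 0)"
      using True by (intro sum.cong) auto
    also have "\<dots> = real_of_int d / \<bar>x\<bar> * real (card {y\<in>{-N..N}. \<bar>y\<bar> \<le> \<bar>x\<bar> \<and> d dvd y})"
      by (rule sum_if_const) simp
    also have "\<dots> \<le> real_of_int d / \<bar>x\<bar> * (2 * \<bar>x\<bar> / d + 1)"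
    proof (rule mult_left_mono)
      have "card {y\<in>{-N..N}. \<bar>y\<bar> \<le> \<bar>x\<bar> \<and> d dvd y} \<le> card {y\<in>{-\<bar>x\<bar>..\<bar>x\<bar>}. d dvd (y - 0)}"
        by (intro card_mono) auto
      then show "real (card {y\<in>{-N..N}. \<bar>y\<bar> \<le> \<bar>x\<bar> \<and> d dvd y}) \<le> 2 * \<bar>x\<bar> / d + 1"
        using card_residue_le[of d "\<bar>x\<bar>" 0] d by (smt (verit) abs_ge_zero of_int_abs of_nat_mono)
    qed (use d in simp)
    also have "\<dots> = 2 + real_of_int d / \<bar>x\<bar>" using True d by (simp add: field_simps)
    also have "\<dots> \<le> 3"
    proof -
      have "d \<le> \<bar>x\<bar>" using dvd_imp_le_int[of x d] True d by simp
      then have "real_of_int d / \<bar>x\<bar> \<le> 1" using True by (simp add: divide_le_eq)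
      then show ?thesis by simp
    qed
    finally show ?thesis using True by simp
  qed
  have "(\<Sum>v\<in>{-N..N}\<times>{-N..N}. ?f v) \<le> (\<Sum>x\<in>{-N..N}. if x \<noteq> 0 \<and> d dvd x then 3 else 0)"
    unfolding eq by (intro sum_mono inner)
  also have "\<dots> = 3 * real (card {x\<in>{-N..N}. x \<noteq> 0 \<and> d dvd x})"
    by (rule sum_if_const) simp
  also have "\<dots> \<le> 3 * (2 * N / d + 1)"
  proof -
    have "card {x\<in>{-N..N}. x \<noteq> 0 \<and> d dvd x} \<le> card {x\<in>{-N..N}. d dvd (x - 0)}"
      by (intro card_mono) auto
    then show ?thesis using card_residue_le[of d N 0] d by simp
  qed
  also have "\<dots> \<le> 9 * N / d"
  proof -
    have "1 \<le> real_of_int N / d" using d by simp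
    moreover have "3 * (2 * N / d + 1) = 6 * (real_of_int N / d) + 3" by (simp add: field_simps)
    moreover have "9 * N / d = 9 * (real_of_int N / d)" by simp
    ultimately show ?thesis by linarith
  qed
  finally show ?thesis .
qed

lemma sum_dvd_mx:
  fixes d N :: int
  assumes d: "1 \<le> d" "d \<le> N"
  shows "(\<Sum>v\<in>{-N..N}\<times>{-N..N} - {(0,0)}. if d dvd fst v \<and> d dvd snd v then real_of_int d / mx v else 0) \<le> 18 * N / d"
proof -
  define g1 where "g1 = (\<lambda>v::int\<times>int. if fst v \<noteq> 0 \<and> \<bar>snd v\<bar> \<le> \<bar>fst v\<bar> \<and> d dvd fst v \<and> d dvd snd v
            then real_of_int d / \<bar>fst v\<bar> else 0)"
  let ?B = "{-N..N}\<times>{-N..N}"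
  have g1nn: "g1 v \<ge> 0" for v unfolding g1_def using d by auto
  have pt: "(if d dvd fst v \<and> d dvd snd v then real_of_int d / mx v else 0) \<le> g1 v + g1 (prod.swap v)"
    if "v \<noteq> (0,0)" for v
  proof (cases "\<bar>snd v\<bar> \<le> \<bar>fst v\<bar>")
    case True
    then have "fst v \<noteq> 0" using that by (cases v) auto
    then have "(if d dvd fst v \<and> d dvd snd v then real_of_int d / mx v else 0) = g1 v"
      using True unfolding g1_def mx_def by auto
    then show ?thesis using g1nn[of "prod.swap v"] by simp
  next
    case False
    then have "snd v \<noteq> 0" by auto
    then have "(if d dvd fst v \<and> d dvd snd v then real_of_int d / mx v else 0) = g1 (prod.swap v)"
      using False unfolding g1_def mx_def by (cases v) auto
    then show ?thesis using g1nn[of v] by simp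
  qed
  have "(\<Sum>v\<in>?B - {(0,0)}. if d dvd fst v \<and> d dvd snd v then real_of_int d / mx v else 0)
      \<le> (\<Sum>v\<in>?B - {(0,0)}. g1 v + g1 (prod.swap v))"
    by (intro sum_mono pt) auto
  also have "\<dots> \<le> (\<Sum>v\<in>?B. g1 v + g1 (prod.swap v))"
    by (intro sum_mono2) (auto intro: add_nonneg_nonneg g1nn)
  also have "\<dots> = (\<Sum>v\<in>?B. g1 v) + (\<Sum>v\<in>?B. g1 (prod.swap v))" by (simp add: sum.distrib)
  also have "(\<Sum>v\<in>?B. g1 (prod.swap v)) = (\<Sum>v\<in>?B. g1 v)"
  proof -
    have "(\<Sum>v\<in>?B. g1 (prod.swap v)) = (\<Sum>v\<in>prod.swap ` ?B. g1 v)"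
      by (subst sum.reindex) (auto simp: inj_on_def)
    also have "prod.swap ` ?B = ?B" by (simp add: product_swap)
    finally show ?thesis .
  qed
  also have "(\<Sum>v\<in>?B. g1 v) \<le> 9 * N / d" unfolding g1_def by (rule sum_g1[OF d])
  finally show ?thesis by simp
qed

definition Fdiv :: "int \<Rightarrow> int \<Rightarrow> real" where
  "Fdiv N t = (\<Sum>d\<in>{1..N}. if d dvd t then 1 / real_of_int d else 0)"

lemma Fdiv_nonneg: "Fdiv N t \<ge> 0"
  unfolding Fdiv_def by (intro sum_nonneg) auto

lemma Fdiv_uminus: "Fdiv N (-t) = Fdiv N t"
  unfolding Fdiv_def by simp

lemma gv_mx:
  assumes "v \<noteq> (0,0)"
  shows "1 \<le> gv v" "gv v \<le> mx v"
proof -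
  obtain a b where ab: "v = (a,b)" by (cases v)
  show "1 \<le> gv v" using assms ab unfolding gv_def by (simp add: int_one_le_iff_zero_less)
  show "gv v \<le> mx v"
  proof (cases "a = 0")
    case True
    then show ?thesis using ab assms unfolding gv_def mx_def by auto
  next
    case False
    have "gcd a b \<le> \<bar>a\<bar>" using dvd_imp_le_int[OF False, of "gcd a b"] by simp
    then show ?thesis using ab unfolding gv_def mx_def by auto
  qed
qed

lemma mx_le: "v \<in> {-N..N}\<times>{-N..N} \<Longrightarrow> mx v \<le> N"
  unfolding mx_def by auto

lemma sum_G:
  fixes N t :: int
  assumes N: "1 \<le> N"
  shows "(\<Sum>v\<in>{-N..N}\<times>{-N..N} - {(0,0)}. if gv v dvd t then real_of_int (gv v) / mx v else 0) \<le> 18 * N * Fdiv N t"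
proof -
  let ?B = "{-N..N}\<times>{-N..N}"
  let ?h = "\<lambda>d v. if d dvd t then (if d dvd fst v \<and> d dvd snd v then real_of_int d / mx v else 0) else 0"
  have pt: "(if gv v dvd t then real_of_int (gv v) / mx v else 0) \<le> (\<Sum>d\<in>{1..N}. ?h d v)"
    if v: "v \<in> ?B - {(0,0)}" for v
  proof (cases "gv v dvd t")
    case False
    have "0 \<le> (\<Sum>d\<in>{1..N}. ?h d v)" by (intro sum_nonneg) (auto simp: mx_def)
    then show ?thesis using False by simp
  next
    case True
    have v0: "v \<noteq> (0,0)" using v by auto
    have mem: "gv v \<in> {1..N}" using gv_mx[OF v0] mx_le[of v N] v by auto
    have "?h (gv v) v = real_of_int (gv v) / mx v" using True unfolding gv_def by auto
    moreover have "?h (gv v) v \<le> (\<Sum>d\<in>{1..N}. ?h d v)"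
      by (rule member_le_sum[OF mem]) (auto simp: mx_def)
    ultimately show ?thesis using True by simp
  qed
  have "(\<Sum>v\<in>?B - {(0,0)}. if gv v dvd t then real_of_int (gv v) / mx v else 0)
      \<le> (\<Sum>v\<in>?B - {(0,0)}. \<Sum>d\<in>{1..N}. ?h d v)" by (intro sum_mono pt)
  also have "\<dots> = (\<Sum>d\<in>{1..N}. \<Sum>v\<in>?B - {(0,0)}. ?h d v)" by (rule sum.swap)
  also have "\<dots> \<le> (\<Sum>d\<in>{1..N}. if d dvd t then 18 * N / d else 0)"
  proof (intro sum_mono)
    fix d assume d: "d \<in> {1..N}"
    show "(\<Sum>v\<in>?B - {(0,0)}. ?h d v) \<le> (if d dvd t then 18 * N / d else 0)"
      using sum_dvd_mx[of d N] d by auto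
  qed
  also have "\<dots> = 18 * N * Fdiv N t" unfolding Fdiv_def sum_distrib_left by (rule sum.cong) auto
  finally show ?thesis .
qed

definition Rset :: "int \<Rightarrow> int \<Rightarrow> ((int\<times>int)\<times>(int\<times>int)) set" where
  "Rset N t = {p \<in> ({-N..N}\<times>{-N..N}) \<times> ({-N..N}\<times>{-N..N}). det2 (fst p) (snd p) = t}"

lemma finite_Rset: "finite (Rset N t)"
  unfolding Rset_def by (rule finite_subset[of _ "({-N..N}\<times>{-N..N}) \<times> ({-N..N}\<times>{-N..N})"]) auto

lemma card_Rset:
  fixes N t :: int
  assumes N: "1 \<le> N"
  shows "real (card (Rset N t)) \<le> 36 * (real_of_int N)^2 * (1 + Fdiv N t)"
proof -
  let ?B = "{-N..N}\<times>{-N..N}"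
  let ?c = "\<lambda>v. card {w \<in> ?B. det2 v w = t}"
  have "Rset N t = Sigma ?B (\<lambda>v. {w \<in> ?B. det2 v w = t})" unfolding Rset_def by auto
  then have "card (Rset N t) = (\<Sum>v\<in>?B. ?c v)" by (simp add: card_SigmaI)
  also have "\<dots> = ?c (0,0) + (\<Sum>v\<in>?B - {(0,0)}. ?c v)"
    using N by (subst sum.remove[of _ "(0,0)"]) auto
  finally have c: "real (card (Rset N t)) = real (?c (0,0)) + (\<Sum>v\<in>?B - {(0,0)}. real (?c v))" by simp
  have cB: "real (card ?B) = (2*N+1)^2" using N by (simp add: power2_eq_square)
  have c0: "real (?c (0,0)) \<le> (2*N+1)^2"
  proof -
    have "?c (0,0) \<le> card ?B" by (intro card_mono) auto
    then show ?thesis using cB by linarith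
  qed
  have pt: "real (?c v) \<le> 1 + 2 * real_of_int N * (if gv v dvd t then real_of_int (gv v) / mx v else 0)"
    if "v \<in> ?B - {(0,0)}" for v
  proof (cases "gv v dvd t")
    case True
    have v0: "v \<noteq> (0,0)" using that by auto
    have b: "real (?c v) \<le> 2 * N * gv v / mx v + 1" by (rule card_det_le(1)[OF v0]) (use N in simp)
    have b2: "real (?c v) \<le> 2 * real_of_int N * real_of_int (gv v) / real_of_int (mx v) + 1" using b by simp
    have e: "2 * real_of_int N * real_of_int (gv v) / real_of_int (mx v) = 2 * real_of_int N * (if gv v dvd t then real_of_int (gv v) / mx v else 0)"
      using True by simp
    show ?thesis using b2 e by linarith
  next
    case False
    have v0: "v \<noteq> (0,0)" using that by auto
    have c00: "?c v = 0" using card_det_le(2)[OF v0, of N t] False N by auto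
    have r0: "real (?c v) = 0" using c00 by (metis of_nat_0)
    have z: "(if gv v dvd t then real_of_int (gv v) / mx v else 0) = 0" using False by simp
    show ?thesis by (simp only: r0 z)
  qed
  have "(\<Sum>v\<in>?B - {(0,0)}. real (?c v)) \<le> (\<Sum>v\<in>?B - {(0,0)}. 1 + 2 * real_of_int N * (if gv v dvd t then real_of_int (gv v) / mx v else 0))"
    by (intro sum_mono pt)
  also have "\<dots> = real (card (?B - {(0,0)})) + 2 * real_of_int N * (\<Sum>v\<in>?B - {(0,0)}. (if gv v dvd t then real_of_int (gv v) / mx v else 0))"
    by (simp add: sum.distrib sum_distrib_left)
  also have "\<dots> \<le> (2*N+1)^2 + 2 * real_of_int N * (18 * N * Fdiv N t)"
  proof (intro add_mono mult_left_mono sum_G N)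
    have "card (?B - {(0,0)}) \<le> card ?B" by (intro card_mono) auto
    then show "real (card (?B - {(0,0)})) \<le> (2*N+1)^2" using cB by linarith
  qed (use N in auto)
  finally have f1: "real (card (Rset N t)) \<le> 2 * (2*real_of_int N+1)^2 + 36 * (real_of_int N)^2 * Fdiv N t"
    using c c0 by (simp add: power2_eq_square algebra_simps)
  have nn: "real_of_int N \<le> real_of_int N * real_of_int N" using N mult_right_mono[of 1 "real_of_int N" "real_of_int N"] by simp
  have e1: "(2*real_of_int N+1)^2 = 4*(real_of_int N * real_of_int N) + 4*real_of_int N + 1" by (simp add: power2_eq_square algebra_simps)
  have e2: "36 * (real_of_int N)^2 * (1 + Fdiv N t) = 36 * (real_of_int N * real_of_int N) + 36 * (real_of_int N)^2 * Fdiv N t"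
    by (simp add: power2_eq_square algebra_simps)
  have "1 \<le> real_of_int N" using N by simp
  then show ?thesis using f1 nn e1 e2 by linarith
qed



definition Zc :: real where "Zc = suminf (\<lambda>n::nat. real n powr (-4/3))"

lemma Zc_summable: "summable (\<lambda>n::nat. real n powr (-4/3))"
  by (simp add: summable_real_powr_iff)

lemma Zc_nonneg: "0 \<le> Zc"
  unfolding Zc_def by (rule suminf_nonneg[OF Zc_summable]) simp

lemma sum_q_le: "(\<Sum>d\<in>{1..N::int}. real_of_int d powr (-4/3)) \<le> Zc"
proof -
  have "{1..N} = int ` {1..nat N}"
  proof
    show "{1..N} \<subseteq> int ` {1..nat N}"
    proof
      fix x assume "x \<in> {1..N}" then show "x \<in> int ` {1..nat N}" by (intro image_eqI[of _ _ "nat x"]) auto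
    qed
  qed auto
  then have "(\<Sum>d\<in>{1..N::int}. real_of_int d powr (-4/3)) = (\<Sum>n\<in>{1..nat N}. real n powr (-4/3))"
    by (simp add: sum.reindex)
  also have "\<dots> \<le> Zc" unfolding Zc_def by (rule sum_le_suminf[OF Zc_summable]) auto
  finally show ?thesis .
qed

lemma cube_sum:
  fixes f :: "'a \<Rightarrow> real"
  shows "(\<Sum>x\<in>A. f x)^3 = (\<Sum>p\<in>A\<times>A\<times>A. f (fst p) * f (fst (snd p)) * f (snd (snd p)))"
proof -
  have "(\<Sum>x\<in>A. f x)^3 = (\<Sum>x\<in>A. f x) * ((\<Sum>x\<in>A. f x) * (\<Sum>x\<in>A. f x))"
    by (simp add: power3_eq_cube)
  also have "\<dots> = (\<Sum>x\<in>A. \<Sum>y\<in>A. \<Sum>z\<in>A. f z * (f y * f x))"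
    by (simp add: sum_distrib_left sum_distrib_right)
  also have "\<dots> = (\<Sum>p\<in>A\<times>A\<times>A. f (fst p) * f (fst (snd p)) * f (snd (snd p)))"
    by (simp add: sum.cartesian_product split_def mult_ac)
  finally show ?thesis .
qed

lemma powr_bound:
  fixes a b c :: real
  assumes "1 \<le> a" "1 \<le> b" "1 \<le> c" and M: "M = max a (max b c)"
  shows "1 / (M * (a * b * c)) \<le> a powr (-4/3) * b powr (-4/3) * c powr (-4/3)"
proof -
  define P where "P = a * b * c"
  have ab: "1 \<le> a * b" using assms mult_mono[of 1 a 1 b] by simp
  have P1: "1 \<le> P" unfolding P_def using ab assms mult_mono[of 1 "a*b" 1 c] by simp
  have M1: "1 \<le> M" using M assms by auto
  have "P \<le> M * M * M" unfolding P_def using assms M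
    by (intro mult_mono) auto
  moreover have "M powr 3 = M * M * M" using M1 by (subst powr_numeral) (auto simp: power3_eq_cube)
  ultimately have "P \<le> M powr 3" by simp
  then have "P powr (1/3) \<le> (M powr 3) powr (1/3)" using P1 by (intro powr_mono2) auto
  also have "\<dots> = M" using M1 by (subst powr_powr) simp
  finally have PM: "P powr (1/3) \<le> M" .
  have "a powr (-4/3) * b powr (-4/3) * c powr (-4/3) = P powr (-4/3)"
    unfolding P_def using assms by (simp add: powr_mult)
  also have "P powr (-4/3) = 1 / (P * P powr (1/3))"
  proof -
    have "P powr (4/3) = P powr (1 + 1/3)" by simp
    also have "\<dots> = P powr 1 * P powr (1/3)" by (rule powr_add)
    also have "P powr 1 = P" using P1 by simp
    finally have e43: "P powr (4/3) = P * P powr (1/3)" .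
    have "P powr (-4/3) = P powr (-(4/3))" by simp
    also have "\<dots> = inverse (P powr (4/3))" by (rule powr_minus)
    also have "\<dots> = 1 / (P * P powr (1/3))" unfolding e43 by (simp add: inverse_eq_divide)
    finally show ?thesis .
  qed
  also have "1 / (P * P powr (1/3)) \<ge> 1 / (P * M)"
  proof -
    have pp: "0 < P powr (1/3)" using P1 by simp
    have M0: "0 < M" using M1 by simp
    show ?thesis using PM P1 pp M0 by (intro divide_left_mono mult_left_mono) (auto intro!: mult_pos_pos)
  qed
  finally show ?thesis unfolding P_def by (simp add: mult.commute)
qed

lemma moment3:
  fixes N X :: int
  assumes N: "1 \<le> N" "N \<le> X"
  shows "(\<Sum>t\<in>{-X..X}. (Fdiv N t)^3) \<le> 3 * X * Zc^3"
proof -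
  let ?D = "{1..N}"
  let ?f = "\<lambda>d t. if d dvd t then 1 / real_of_int d else (0::real)"
  let ?h = "\<lambda>p t. ?f (fst p) t * ?f (fst (snd p)) t * ?f (snd (snd p)) t"
  let ?q = "\<lambda>d::int. real_of_int d powr (-4/3)"
  have "(\<Sum>t\<in>{-X..X}. (Fdiv N t)^3) = (\<Sum>t\<in>{-X..X}. \<Sum>p\<in>?D\<times>?D\<times>?D. ?h p t)"
    unfolding Fdiv_def by (simp only: cube_sum)
  also have "\<dots> = (\<Sum>p\<in>?D\<times>?D\<times>?D. \<Sum>t\<in>{-X..X}. ?h p t)" by (rule sum.swap)
  also have "\<dots> \<le> (\<Sum>p\<in>?D\<times>?D\<times>?D. 3 * X * (?q (fst p) * ?q (fst (snd p)) * ?q (snd (snd p))))"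
  proof (rule sum_mono)
    fix p assume p: "p \<in> ?D\<times>?D\<times>?D"
    obtain d1 d2 d3 where pd: "p = (d1, d2, d3)" by (cases p) auto
    have d: "1 \<le> d1" "d1 \<le> N" "1 \<le> d2" "d2 \<le> N" "1 \<le> d3" "d3 \<le> N" using p pd by auto
    let ?C = "{t\<in>{-X..X}. d1 dvd t \<and> d2 dvd t \<and> d3 dvd t}"
    have "(\<Sum>t\<in>{-X..X}. ?h p t) = (\<Sum>t\<in>{-X..X}. if d1 dvd t \<and> d2 dvd t \<and> d3 dvd t then 1 / (real_of_int d1 * d2 * d3) else 0)"
      unfolding pd by (intro sum.cong) auto
    also have "\<dots> = 1 / (real_of_int d1 * d2 * d3) * real (card ?C)" by (rule sum_if_const) simp
    finally have e: "(\<Sum>t\<in>{-X..X}. ?h p t) = 1 / (real_of_int d1 * d2 * d3) * real (card ?C)" .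
    have cb: "real (card ?C) * d \<le> 3 * X" if "d \<in> {d1, d2, d3}" for d
    proof -
      have dd: "1 \<le> d" "d \<le> X" using that d N by auto
      have "card ?C \<le> card {t\<in>{-X..X}. d dvd (t - 0)}" using that by (intro card_mono) auto
      then have "real (card ?C) \<le> 2 * X / d + 1" using card_residue_le[of d X 0] dd by simp
      then have "real (card ?C) * d \<le> (2 * X / d + 1) * d" using dd by (intro mult_right_mono) auto
      also have "\<dots> = 2 * X + d" using dd by (simp add: field_simps)
      also have "\<dots> \<le> 3 * X" using dd by simp
      finally show ?thesis .
    qed
    define M where "M = max (real_of_int d1) (max (real_of_int d2) (real_of_int d3))"
    have "M \<in> {real_of_int d1, real_of_int d2, real_of_int d3}" unfolding M_def by (auto simp: max_def)
    then have cM: "real (card ?C) * M \<le> 3 * X" using cb by auto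
    have M1: "1 \<le> M" unfolding M_def using d by auto
    have "1 / (real_of_int d1 * d2 * d3) * real (card ?C) = (real (card ?C) * M) * (1 / (M * (real_of_int d1 * d2 * d3)))"
      using M1 d by (simp add: field_simps)
    also have "\<dots> \<le> (3 * X) * (1 / (M * (real_of_int d1 * d2 * d3)))"
      using cM M1 d by (intro mult_right_mono) auto
    also have "\<dots> \<le> (3 * X) * (?q d1 * ?q d2 * ?q d3)"
      using powr_bound[of "real_of_int d1" "real_of_int d2" "real_of_int d3" M] d M_def N
      by (intro mult_left_mono) auto
    finally show "(\<Sum>t\<in>{-X..X}. ?h p t) \<le> 3 * X * (?q (fst p) * ?q (fst (snd p)) * ?q (snd (snd p)))"
      using e pd by simp
  qed
  also have "\<dots> = 3 * X * (\<Sum>d\<in>?D. ?q d)^3"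
    by (simp add: cube_sum sum_distrib_left)
  also have "\<dots> \<le> 3 * X * Zc^3"
  proof -
    have "0 \<le> (\<Sum>d\<in>?D. ?q d)" by (intro sum_nonneg) auto
    then have "(\<Sum>d\<in>?D. ?q d)^3 \<le> Zc^3" using sum_q_le[of N] by (intro power_mono) auto
    then show ?thesis using N by (intro mult_left_mono) auto
  qed
  finally show ?thesis .
qed


lemma exhaust_6: fixes x :: 6 shows "x = 1 \<or> x = 2 \<or> x = 3 \<or> x = 4 \<or> x = 5 \<or> x = 6"
proof (induct x)
  case (of_int z)
  then have "z = 0 \<or> z = 1 \<or> z = 2 \<or> z = 3 \<or> z = 4 \<or> z = 5" by fastforce
  then show ?case by auto
qed

lemma comm_entries:
  fixes A B :: "int^3^3"
  assumes "A ** B = B ** A"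
  shows "\<And>i j. A$i$1 * B$1$j + A$i$2 * B$2$j + A$i$3 * B$3$j = B$i$1 * A$1$j + B$i$2 * A$2$j + B$i$3 * A$3$j"
proof -
  fix i j
  have "(A ** B)$i$j = (B ** A)$i$j" using assms by simp
  then show "A$i$1 * B$1$j + A$i$2 * B$2$j + A$i$3 * B$3$j = B$i$1 * A$1$j + B$i$2 * A$2$j + B$i$3 * A$3$j"
    by (simp add: matrix_matrix_mult_def sum_3)
qed

definition uvec :: "int^3^3 \<Rightarrow> int^3^3 \<Rightarrow> real^4" where
  "uvec A B = vector [real_of_int (A$1$1 - A$2$2), real_of_int (B$1$1 - B$2$2),
                      real_of_int (A$1$1 - A$3$3), real_of_int (B$1$1 - B$3$3)]"

definition rvec :: "int^3^3 \<Rightarrow> int^3^3 \<Rightarrow> real^6" where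
  "rvec A B = vector [real_of_int (A$1$3*B$3$2 - B$1$3*A$3$2),
                      real_of_int (A$2$3*B$3$1 - B$2$3*A$3$1),
                      real_of_int (A$1$2*B$2$3 - B$1$2*A$2$3),
                      real_of_int (A$3$2*B$2$1 - B$3$2*A$2$1),
                      real_of_int (B$3$1*A$1$2 - A$3$1*B$1$2),
                      real_of_int (B$2$1*A$1$3 - A$2$1*B$1$3)]"

lemma M_u:
  fixes A B :: "int^3^3"
  assumes "A ** B = B ** A"
  shows "Mmat A B *v uvec A B = rvec A B"
proof -
  note c = comm_entries[OF assms]
  have e12: "real_of_int (A$1$1 * B$1$2 + A$1$2 * B$2$2 + A$1$3 * B$3$2) = real_of_int (B$1$1 * A$1$2 + B$1$2 * A$2$2 + B$1$3 * A$3$2)"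
    using c[of 1 2] by simp
  have e21: "real_of_int (A$2$1 * B$1$1 + A$2$2 * B$2$1 + A$2$3 * B$3$1) = real_of_int (B$2$1 * A$1$1 + B$2$2 * A$2$1 + B$2$3 * A$3$1)"
    using c[of 2 1] by simp
  have e13: "real_of_int (A$1$1 * B$1$3 + A$1$2 * B$2$3 + A$1$3 * B$3$3) = real_of_int (B$1$1 * A$1$3 + B$1$2 * A$2$3 + B$1$3 * A$3$3)"
    using c[of 1 3] by simp
  have e31: "real_of_int (A$3$1 * B$1$1 + A$3$2 * B$2$1 + A$3$3 * B$3$1) = real_of_int (B$3$1 * A$1$1 + B$3$2 * A$2$1 + B$3$3 * A$3$1)"
    using c[of 3 1] by simp
  have e32: "real_of_int (A$3$1 * B$1$2 + A$3$2 * B$2$2 + A$3$3 * B$3$2) = real_of_int (B$3$1 * A$1$2 + B$3$2 * A$2$2 + B$3$3 * A$3$2)"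
    using c[of 3 2] by simp
  have e23: "real_of_int (A$2$1 * B$1$3 + A$2$2 * B$2$3 + A$2$3 * B$3$3) = real_of_int (B$2$1 * A$1$3 + B$2$2 * A$2$3 + B$2$3 * A$3$3)"
    using c[of 2 3] by simp
  show ?thesis
    unfolding vec_eq_iff
  proof
    fix i :: 6
    show "(Mmat A B *v uvec A B) $ i = rvec A B $ i"
      using exhaust_6[of i] e12 e21 e13 e31 e32 e23
      by (auto simp: Mmat_def uvec_def rvec_def matrix_vector_mult_def sum_4 vector_def ent_def algebra_simps)
  qed
qed

definition Phi :: "(int^3^3) \<times> (int^3^3) \<Rightarrow> (int \<times> int) \<times> ((int\<times>int)\<times>(int\<times>int)) \<times> ((int\<times>int)\<times>(int\<times>int)) \<times> ((int\<times>int)\<times>(int\<times>int))" where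
  "Phi p = (let A = fst p; B = snd p in
     ((A$1$1, B$1$1), ((A$1$2,B$1$2),(A$2$1,B$2$1)), ((A$2$3,B$2$3),(A$3$2,B$3$2)), ((A$1$3,B$1$3),(A$3$1,B$3$1))))"

definition Tgt :: "int \<Rightarrow> ((int \<times> int) \<times> ((int\<times>int)\<times>(int\<times>int)) \<times> ((int\<times>int)\<times>(int\<times>int)) \<times> ((int\<times>int)\<times>(int\<times>int))) set" where
  "Tgt N = ({-N..N}\<times>{-N..N}) \<times> (\<Union>t\<in>{-(2*N^2)..2*N^2}. Rset N t \<times> Rset N t \<times> Rset N (-t))"

lemma abs_prod_le:
  fixes x y N :: int
  assumes "\<bar>x\<bar> \<le> N" "\<bar>y\<bar> \<le> N"
  shows "\<bar>x * y\<bar> \<le> N^2"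
proof -
  have "\<bar>x * y\<bar> = \<bar>x\<bar> * \<bar>y\<bar>" by (simp add: abs_mult)
  also have "\<dots> \<le> N * N" using assms by (intro mult_mono) auto
  finally show ?thesis by (simp add: power2_eq_square)
qed

lemma Phi_in:
  assumes p: "p \<in> S4 N"
  shows "Phi p \<in> Tgt N"
proof -
  obtain A B where pAB: "p = (A, B)" by (cases p)
  have bd: "\<And>i j. \<bar>A $ i $ j\<bar> \<le> N \<and> \<bar>B $ i $ j\<bar> \<le> N" and comm: "A ** B = B ** A"
    using p pAB unfolding S4_def by (auto simp: Let_def)
  note c = comm_entries[OF comm]
  define t where "t = A$1$2 * B$2$1 - B$1$2 * A$2$1"
  have c11: "A$1$1 * B$1$1 + A$1$2 * B$2$1 + A$1$3 * B$3$1 = B$1$1 * A$1$1 + B$1$2 * A$2$1 + B$1$3 * A$3$1"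
    using c[of 1 1] .
  have c22: "A$2$1 * B$1$2 + A$2$2 * B$2$2 + A$2$3 * B$3$2 = B$2$1 * A$1$2 + B$2$2 * A$2$2 + B$2$3 * A$3$2"
    using c[of 2 2] .
  have d1: "det2 (A$1$2,B$1$2) (A$2$1,B$2$1) = t" unfolding det2_def t_def by simp
  have d2: "det2 (A$2$3,B$2$3) (A$3$2,B$3$2) = t" unfolding det2_def t_def using c22 by (simp add: algebra_simps)
  have d3: "det2 (A$1$3,B$1$3) (A$3$1,B$3$1) = -t" unfolding det2_def t_def using c11 by (simp add: algebra_simps)
  have "\<bar>A$1$2 * B$2$1\<bar> \<le> N^2" "\<bar>B$1$2 * A$2$1\<bar> \<le> N^2" using bd by (auto intro!: abs_prod_le)
  then have tb: "t \<in> {-(2*N^2)..2*N^2}" unfolding t_def by auto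
  have inB: "A$i$j \<in> {-N..N} \<and> B$i$j \<in> {-N..N}" for i j using bd[of i j] by (auto simp: abs_le_iff)
  show ?thesis unfolding Tgt_def Phi_def pAB
    using tb d1 d2 d3 inB by (auto simp: Rset_def)
qed

lemma rank4_inj:
  assumes "rank (Mmat A B) = 4"
  shows "inj ((*v) (Mmat A B))"
  using assms full_rank_injective[of "Mmat A B"] by simp

lemma Phi_inj: "inj_on Phi (S4 N)"
proof (rule inj_onI)
  fix p p' assume p: "p \<in> S4 N" and p': "p' \<in> S4 N" and e: "Phi p = Phi p'"
  obtain A B where pAB: "p = (A, B)" by (cases p)
  obtain A' B' where pAB': "p' = (A', B')" by (cases p')
  have comm: "A ** B = B ** A" and rk: "rank (Mmat A B) = 4" using p pAB unfolding S4_def by (auto simp: Let_def)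
  have comm': "A' ** B' = B' ** A'" using p' pAB' unfolding S4_def by (auto simp: Let_def)
  have E: "A$1$1 = A'$1$1" "B$1$1 = B'$1$1" "A$1$2 = A'$1$2" "B$1$2 = B'$1$2" "A$2$1 = A'$2$1" "B$2$1 = B'$2$1"
    "A$2$3 = A'$2$3" "B$2$3 = B'$2$3" "A$3$2 = A'$3$2" "B$3$2 = B'$3$2"
    "A$1$3 = A'$1$3" "B$1$3 = B'$1$3" "A$3$1 = A'$3$1" "B$3$1 = B'$3$1"
    using e unfolding pAB pAB' Phi_def by (auto simp: Let_def)
  have ME: "Mmat A B = Mmat A' B'" unfolding Mmat_def ent_def using E by simp
  have RE: "rvec A B = rvec A' B'" unfolding rvec_def using E by simp
  have "Mmat A B *v uvec A B = Mmat A B *v uvec A' B'"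
    using M_u[OF comm] M_u[OF comm'] ME RE by simp
  then have UE: "uvec A B = uvec A' B'" using rank4_inj[OF rk] by (simp add: inj_eq)
  have u1: "A$1$1 - A$2$2 = A'$1$1 - A'$2$2" using arg_cong[OF UE, of "\<lambda>v. v $ 1"] by (simp add: uvec_def vector_def)
  have u2: "B$1$1 - B$2$2 = B'$1$1 - B'$2$2" using arg_cong[OF UE, of "\<lambda>v. v $ 2"] by (simp add: uvec_def vector_def)
  have u3: "A$1$1 - A$3$3 = A'$1$1 - A'$3$3" using arg_cong[OF UE, of "\<lambda>v. v $ 3"] by (simp add: uvec_def vector_def)
  have u4: "B$1$1 - B$3$3 = B'$1$1 - B'$3$3" using arg_cong[OF UE, of "\<lambda>v. v $ 4"] by (simp add: uvec_def vector_def)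
  have "A = A'" unfolding vec_eq_iff forall_3 using E u1 u3 by simp
  moreover have "B = B'" unfolding vec_eq_iff forall_3 using E u2 u4 by simp
  ultimately show "p = p'" using pAB pAB' by simp
qed

lemma finite_Tgt: "finite (Tgt N)"
  unfolding Tgt_def using finite_Rset by auto

lemma card_S4_le:
  "real (card (S4 N)) \<le> real (card ({-N..N}\<times>{-N..N}::(int\<times>int) set)) *
     (\<Sum>t\<in>{-(2*N^2)..2*N^2}. real (card (Rset N t)) * real (card (Rset N t)) * real (card (Rset N (-t))))"
proof -
  have "card (S4 N) \<le> card (Tgt N)"
    by (rule card_inj_on_le[OF Phi_inj]) (auto intro: Phi_in finite_Tgt)
  also have "card (Tgt N) = card ({-N..N}\<times>{-N..N}::(int\<times>int) set) * card (\<Union>t\<in>{-(2*N^2)..2*N^2}. Rset N t \<times> Rset N t \<times> Rset N (-t))"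
    unfolding Tgt_def by (simp add: card_cartesian_product)
  also have "card (\<Union>t\<in>{-(2*N^2)..2*N^2}. Rset N t \<times> Rset N t \<times> Rset N (-t)) \<le> (\<Sum>t\<in>{-(2*N^2)..2*N^2}. card (Rset N t \<times> Rset N t \<times> Rset N (-t)))"
    by (rule card_UN_le) simp
  finally have "card (S4 N) \<le> card ({-N..N}\<times>{-N..N}::(int\<times>int) set) * (\<Sum>t\<in>{-(2*N^2)..2*N^2}. card (Rset N t) * card (Rset N t) * card (Rset N (-t)))"
    by (simp add: card_cartesian_product mult.assoc)
  then have "real (card (S4 N)) \<le> real (card ({-N..N}\<times>{-N..N}::(int\<times>int) set) * (\<Sum>t\<in>{-(2*N^2)..2*N^2}. card (Rset N t) * card (Rset N t) * card (Rset N (-t))))"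
    by (simp only: of_nat_le_iff)
  then show ?thesis by simp
qed

lemma cube_le: "0 \<le> (x::real) \<Longrightarrow> (1 + x)^3 \<le> 4 + 4 * x^3"
proof -
  assume x: "0 \<le> x"
  have "0 \<le> (x - 1)^2 * (x + 1)" using x by simp
  then show ?thesis by (simp add: power2_eq_square power3_eq_cube algebra_simps)
qed

theorem lemma4p2:
  "\<exists>C::real. C > 0 \<and> (\<forall>N::int. N \<ge> 1 \<longrightarrow> real (card (S4 N)) \<le> C * real_of_int N ^ 10)"
proof (intro exI conjI allI impI)
  show "0 < 36^4 * (5 + 6 * Zc^3)" using Zc_nonneg by (simp add: add_pos_nonneg)
next
  fix N :: int assume N: "1 \<le> N"
  define n where "n = real_of_int N"
  have n1: "1 \<le> n" using N unfolding n_def by simp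
  define K where "K = 36 * n^2"
  have K0: "0 \<le> K" unfolding K_def by simp
  let ?T = "{-(2*N^2)..2*N^2}"
  have X: "N \<le> 2 * N^2"
  proof -
    have "N \<le> N * N" using N mult_right_mono[of 1 N N] by simp
    then show ?thesis using N by (simp add: power2_eq_square)
  qed
  have pt: "real (card (Rset N t)) * real (card (Rset N t)) * real (card (Rset N (-t))) \<le> K^3 * (4 + 4 * (Fdiv N t)^3)" for t
  proof -
    have r1: "real (card (Rset N t)) \<le> K * (1 + Fdiv N t)" using card_Rset[OF N, of t] unfolding K_def n_def .
    have r2: "real (card (Rset N (-t))) \<le> K * (1 + Fdiv N t)" using card_Rset[OF N, of "-t"] unfolding K_def n_def Fdiv_uminus .
    have "real (card (Rset N t)) * real (card (Rset N t)) * real (card (Rset N (-t))) \<le> (K * (1 + Fdiv N t)) * (K * (1 + Fdiv N t)) * (K * (1 + Fdiv N t))"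
      using r1 r2 by (intro mult_mono) (auto intro: mult_nonneg_nonneg)
    also have "\<dots> = K^3 * (1 + Fdiv N t)^3" by (simp add: power3_eq_cube algebra_simps)
    also have "\<dots> \<le> K^3 * (4 + 4 * (Fdiv N t)^3)" using cube_le[OF Fdiv_nonneg] K0 by (intro mult_left_mono) auto
    finally show ?thesis .
  qed
  have "(\<Sum>t\<in>?T. real (card (Rset N t)) * real (card (Rset N t)) * real (card (Rset N (-t)))) \<le> (\<Sum>t\<in>?T. K^3 * (4 + 4 * (Fdiv N t)^3))"
    by (intro sum_mono pt)
  also have "\<dots> = K^3 * (\<Sum>t\<in>?T. 4 + 4 * (Fdiv N t)^3)" by (rule sum_distrib_left[symmetric])
  also have "\<dots> = K^3 * (4 * real (card ?T) + 4 * (\<Sum>t\<in>?T. (Fdiv N t)^3))"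
  proof -
    have "(\<Sum>t\<in>?T. 4 + 4 * (Fdiv N t)^3) = 4 * real (card ?T) + 4 * (\<Sum>t\<in>?T. (Fdiv N t)^3)"
      by (simp only: sum.distrib sum_distrib_left[symmetric]) simp
    then show ?thesis by simp
  qed
  also have "\<dots> \<le> K^3 * (4 * (5 * n^2) + 4 * (3 * (2 * n^2) * Zc^3))"
  proof -
    have "card ?T = nat (4 * N^2 + 1)" by simp
    then have "real (card ?T) = 4 * n^2 + 1" unfolding n_def using N by simp
    moreover have "1 \<le> n * n" using n1 mult_mono[of 1 n 1 n] by simp
    ultimately have cT: "real (card ?T) \<le> 5 * n^2" by (simp add: power2_eq_square)
    have m: "(\<Sum>t\<in>?T. (Fdiv N t)^3) \<le> real_of_int (3 * (2 * N^2)) * Zc^3" using moment3[OF N X] .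
    have "real_of_int (3 * (2 * N^2)) = 3 * (2 * n^2)" unfolding n_def by simp
    then have "4 * real (card ?T) + 4 * (\<Sum>t\<in>?T. (Fdiv N t)^3) \<le> 4 * (5 * n^2) + 4 * (3 * (2 * n^2) * Zc^3)"
      using cT m by simp
    then show ?thesis using K0 by (intro mult_left_mono) auto
  qed
  finally have s: "(\<Sum>t\<in>?T. real (card (Rset N t)) * real (card (Rset N t)) * real (card (Rset N (-t)))) \<le> K^3 * (20 * n^2 + 24 * n^2 * Zc^3)"
    by (simp add: algebra_simps)
  have cB: "real (card ({-N..N}\<times>{-N..N}::(int\<times>int) set)) \<le> 9 * n^2"
  proof -
    have "real (card ({-N..N}\<times>{-N..N}::(int\<times>int) set)) = (2*n+1)^2" unfolding n_def using N by (simp add: card_cartesian_product power2_eq_square)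
    moreover have "(2*n+1)^2 \<le> 9 * n^2"
    proof -
      have nn: "n \<le> n * n" using n1 mult_right_mono[of 1 n n] by simp
      have "(2*n+1)^2 = 4*(n*n) + 4*n + 1" by (simp add: power2_eq_square algebra_simps)
      moreover have "9*n^2 = 9*(n*n)" by (simp add: power2_eq_square)
      ultimately show ?thesis using nn n1 by linarith
    qed
    ultimately show ?thesis by simp
  qed
  have "real (card (S4 N)) \<le> real (card ({-N..N}\<times>{-N..N}::(int\<times>int) set)) * (\<Sum>t\<in>?T. real (card (Rset N t)) * real (card (Rset N t)) * real (card (Rset N (-t))))"
    by (rule card_S4_le)
  also have "\<dots> \<le> (9 * n^2) * (K^3 * (20 * n^2 + 24 * n^2 * Zc^3))"
    using cB s by (intro mult_mono) (auto intro!: sum_nonneg)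
  also have "\<dots> = 36^4 * (5 + 6 * Zc^3) * n^10" unfolding K_def by (simp add: power_mult_distrib eval_nat_numeral algebra_simps)
  finally show "real (card (S4 N)) \<le> 36^4 * (5 + 6 * Zc^3) * real_of_int N ^ 10" unfolding n_def .
qed

end
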